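(* In the DID setting of the context with $N_1=1$ (single treated unit, indexed $1$), suppose Assumption 1 holds. Consider testing $H_0:\alpha=\alpha_0$ at level $\tau\in(0,1)$ by rejecting when $\widehat\alpha-\alpha_0$ is below the $\tau/2$-quantile or above the $1-\tau/2$-quantile of the empirical distribution $\widehat F$ of the control residuals $\{\widehat W_i\}_{i\in\mathcal I_0}$. Then, under $H_0$, the rejection probability converges to $\tau$ as $N_0\to\infty$ (the test is asymptotically valid), even though the errors may be spatially correlated.
   Context: Units $i\in\mathcal I_1$ (treated, $|\mathcal I_1|=N_1$) and $i\in\mathcal I_0$ (control, $|\mathcal I_0|=N_0$), periods $t=1,\dots,T$; $\mathcal T_0=\{1,\dots,t^\ast\}$, $\mathcal T_1=\{t^\ast+1,\dots,T\}$, $T$ fixed. Potential outcomes: $Y_{it}(0)=\theta_i+\gamma_t+\eta_{it}$, $Y_{it}(1)=\alpha_{it}+Y_{it}(0)$; observed $Y_{it}=Y_{it}(1)$ if $i\in\mathcal I_1,t\in\mathcal T_1$, else $Y_{it}(0)$. The $\alpha_{it}$ are fixed and $\alpha=\frac{1}{N_1}\frac{1}{T-t^\ast}\sum_{i\in\mathcal I_1}\sum_{t\in\mathcal T_1}\alpha_{it}$. For a sequence $A_t$, $\nabla A=\frac{1}{T-t^\ast}\sum_{t\in\mathcal T_1}A_t-\frac{1}{t^\ast}\sum_{t\in\mathcal T_0}A_t$; $W_i=\nabla\eta_{i\cdot}$. $\widehat\alpha=\frac{1}{N_1}\sum_{i\in\mathcal I_1}\nabla Y_i-\frac{1}{N_0}\sum_{i\in\mathcal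 I_0}\nabla Y_i$; control residuals $\widehat W_i=\nabla Y_i-\frac1{N_0}\sum_{j\in\mathcal I_0}\nabla Y_j$; $\widehat F(c)=N_0^{-1}\sum_{i\in\mathcal I_0}\mathbbm 1\{\widehat W_i\le c\}$. Treatment assignment is fixed. Assumption 1: (i) $\mathbb E[W_i]=0$ for all $i$; (ii) all $W_i$ have the same marginal distribution, with continuous cdf $F$ and finite second moment; (iii) as $N_0\to\infty$, $\frac1{N_0}\sum_{i\in\mathcal I_0}W_i\xrightarrow{p}0$ and $\frac1{N_0}\sum_{i\in\mathcal I_0}\mathbbm 1\{W_i\le c\}\xrightarrow{p}F(c)$ for each $c$. *)

theory Defs
  imports "HOL-Probability.Probability"
begin

definition nabla :: "nat \<Rightarrow> nat \<Rightarrow> (nat \<Rightarrow> real) \<Rightarrow> real" where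
  "nabla T tstar A =
     (\<Sum>t\<in>{tstar<..T}. A t) / real (T - tstar) - (\<Sum>t\<in>{1..tstar}. A t) / real tstar"

text \<open>Observed outcome with a single treated unit (index 0) and control units 1..n.
  Y(0) = theta_i + gamma_t + eta_it, Y(1) = alpha_it + Y(0).\<close>
definition Yobs :: "nat \<Rightarrow> (nat \<Rightarrow> real) \<Rightarrow> real \<Rightarrow> real \<Rightarrow> real \<Rightarrow> nat \<Rightarrow> nat \<Rightarrow> real" where
  "Yobs tstar a th ga et i t = (if i = 0 \<and> tstar < t then a t + th + ga + et else th + ga + et)"

definition emp_cdf :: "nat \<Rightarrow> (nat \<Rightarrow> real) \<Rightarrow> real \<Rightarrow> real" where
  "emp_cdf n x c = real (card {i\<in>{1..n}. x i \<le> c}) / real n"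

definition emp_quantile :: "nat \<Rightarrow> (nat \<Rightarrow> real) \<Rightarrow> real \<Rightarrow> real" where
  "emp_quantile n x p = Inf {c. p \<le> emp_cdf n x c}"

definition conv_in_prob :: "'a measure \<Rightarrow> (nat \<Rightarrow> 'a \<Rightarrow> real) \<Rightarrow> real \<Rightarrow> bool" where
  "conv_in_prob M X c \<longleftrightarrow>
     (\<forall>e>0. (\<lambda>n. measure M {\<omega>\<in>space M. e < \<bar>X n \<omega> - c\<bar>}) \<longlonglongrightarrow> 0)"

end

theory Submission
  imports Defs
begin


definition ltc :: "nat \<Rightarrow> (nat \<Rightarrow> real) \<Rightarrow> real \<Rightarrow> real" where
  "ltc n x c = real (card {i\<in>{1..n}. x i < c}) / real n"

lemma sum_if_card: fixes n :: nat shows "(\<Sum>i\<in>{1..n}. if P i then 1 else (0::real)) = real (card {i\<in>{1..n}. P i})"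
proof -
  have "sum (\<lambda>_. 1::real) {i\<in>{1..n}. P i} = (\<Sum>i\<in>{1..n}. if P i then 1 else (0::real))"
    by (subst sum.inter_filter) auto
  thus ?thesis by simp
qed

lemma emp_cdf_sum: "emp_cdf n x c = (\<Sum>i\<in>{1..n}. if x i \<le> c then 1 else 0) / real n"
  by (simp only: emp_cdf_def sum_if_card)

lemma ltc_sum: "ltc n x c = (\<Sum>i\<in>{1..n}. if x i < c then 1 else 0) / real n"
  by (simp only: ltc_def sum_if_card)

lemma emp_cdf_mono: "c \<le> d \<Longrightarrow> emp_cdf n x c \<le> emp_cdf n x d"
  unfolding emp_cdf_def
  by (rule divide_right_mono) (auto intro!: card_mono)

lemma ltc_le_emp_cdf: "c \<le> d \<Longrightarrow> ltc n x c \<le> emp_cdf n x d"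
  unfolding emp_cdf_def ltc_def
  by (rule divide_right_mono) (auto intro!: card_mono)

lemma emp_cdf_le_ltc: "c < d \<Longrightarrow> emp_cdf n x c \<le> ltc n x d"
  unfolding emp_cdf_def ltc_def
  by (rule divide_right_mono) (auto intro!: card_mono)

lemma emp_cdf_shift: "emp_cdf n (\<lambda>i. x i - m) c = emp_cdf n x (c + m)"
  unfolding emp_cdf_def by (simp add: algebra_simps)

lemma ltc_shift: "ltc n (\<lambda>i. x i - m) c = ltc n x (c + m)"
  unfolding ltc_def by (simp add: algebra_simps)

lemma emp_cdf_cong: "(\<And>i. i \<in> {1..n} \<Longrightarrow> x i = y i) \<Longrightarrow> emp_cdf n x c = emp_cdf n y c"
  unfolding emp_cdf_def by (metis (no_types, lifting) mem_Collect_eq)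

lemma emp_quantile_cong: "(\<And>i. i \<in> {1..n} \<Longrightarrow> x i = y i) \<Longrightarrow> emp_quantile n x p = emp_quantile n y p"
  unfolding emp_quantile_def using emp_cdf_cong[of n x y] by presburger

lemma quantile_le_iff:
  assumes n: "1 \<le> n" and p: "0 < p" "p \<le> 1"
  shows "emp_quantile n x p \<le> c \<longleftrightarrow> p \<le> emp_cdf n x c"
proof -
  define S where "S = {c. p \<le> emp_cdf n x c}"
  define lo where "lo = Min (x ` {1..n})"
  define hi where "hi = Max (x ` {1..n})"
  have fin: "finite (x ` {1..n})" "x ` {1..n} \<noteq> {}" using n by auto
  have "emp_cdf n x hi = 1"
  proof -
    have "{i\<in>{1..n}. x i \<le> hi} = {1..n}" using fin by (auto simp: hi_def)
    thus ?thesis using n by (simp add: emp_cdf_def)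
  qed
  hence hiS: "hi \<in> S" using p by (simp add: S_def)
  have bdd: "\<And>d. d \<in> S \<Longrightarrow> lo \<le> d"
  proof (rule ccontr)
    fix d assume "d \<in> S" "\<not> lo \<le> d"
    moreover have "\<And>i. i\<in>{1..n} \<Longrightarrow> lo \<le> x i" unfolding lo_def using fin by auto
    ultimately have "{i\<in>{1..n}. x i \<le> d} = {}" by force
    hence "emp_cdf n x d = 0" by (simp add: emp_cdf_def)
    thus False using \<open>d \<in> S\<close> p by (simp add: S_def)
  qed
  have bddS: "bdd_below S" using bdd by (auto simp: bdd_below_def)
  have up: "\<And>d e. d \<in> S \<Longrightarrow> d \<le> e \<Longrightarrow> e \<in> S"
    using emp_cdf_mono unfolding S_def by (metis mem_Collect_eq order_trans)
  define s where "s = Inf S"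
  have sS: "s \<in> S"
  proof (rule ccontr)
    assume ns: "s \<notin> S"
    define d where "d = Min (insert (s+1) {x i |i. i \<in> {1..n} \<and> x i > s})"
    have fd: "finite (insert (s+1) {x i |i. i \<in> {1..n} \<and> x i > s})" by simp
    have sd: "s < d" unfolding d_def using fd by (subst Min_gr_iff) auto
    obtain e where eS: "e \<in> S" and ed: "e < d"
      using cInf_lessD[of S d] hiS sd by (auto simp: s_def)
    have se: "s \<le> e" using cInf_lower[OF eS bddS] by (simp add: s_def)
    have "{i\<in>{1..n}. x i \<le> e} = {i\<in>{1..n}. x i \<le> s}"
    proof safe
      fix i assume i: "i \<in> {1..n}" "x i \<le> e"
      show "x i \<le> s"
      proof (rule ccontr)
        assume "\<not> x i \<le> s"
        hence "d \<le> x i" unfolding d_def using fd i by (intro Min_le) auto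
        thus False using i ed by simp
      qed
    qed (use se in auto)
    hence "emp_cdf n x e = emp_cdf n x s" by (simp add: emp_cdf_def)
    thus False using eS ns by (simp add: S_def)
  qed
  show ?thesis
  proof
    assume "emp_quantile n x p \<le> c"
    hence "s \<le> c" by (simp add: s_def S_def emp_quantile_def)
    thus "p \<le> emp_cdf n x c" using up[OF sS] by (simp add: S_def)
  next
    assume "p \<le> emp_cdf n x c"
    hence "c \<in> S" by (simp add: S_def)
    thus "emp_quantile n x p \<le> c" using cInf_lower[OF _ bddS] by (simp add: S_def emp_quantile_def)
  qed
qed

lemma quantile_less_iff:
  assumes n: "1 \<le> n" and p: "0 < p" "p \<le> 1"
  shows "emp_quantile n x p < y \<longleftrightarrow> p \<le> ltc n x y"
proof
  assume "emp_quantile n x p < y"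
  moreover have "p \<le> emp_cdf n x (emp_quantile n x p)" using quantile_le_iff[OF assms, of x "emp_quantile n x p"] by simp
  ultimately show "p \<le> ltc n x y" using emp_cdf_le_ltc order_trans by blast
next
  assume h: "p \<le> ltc n x y"
  define d where "d = Max (insert (y-1) {x i |i. i \<in> {1..n} \<and> x i < y})"
  have fd: "finite (insert (y-1) {x i |i. i \<in> {1..n} \<and> x i < y})" by simp
  have dy: "d < y" unfolding d_def using fd by (subst Max_less_iff) auto
  have "{i\<in>{1..n}. x i < y} \<subseteq> {i\<in>{1..n}. x i \<le> d}"
  proof safe
    fix i assume "i \<in> {1..n}" "x i < y"
    thus "x i \<le> d" unfolding d_def using fd by (intro Max_ge) auto
  qed
  hence "card {i\<in>{1..n}. x i < y} \<le> card {i\<in>{1..n}. x i \<le> d}" by (intro card_mono) auto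
  hence "ltc n x y \<le> emp_cdf n x d"
    unfolding emp_cdf_def ltc_def by (intro divide_right_mono) auto
  hence "emp_quantile n x p \<le> d" using quantile_le_iff[OF assms] h by simp
  thus "emp_quantile n x p < y" using dy by simp
qed



lemma L1:
  fixes M :: "'a measure" and Z :: "nat \<Rightarrow> 'a \<Rightarrow> real" and X :: "nat \<Rightarrow> nat \<Rightarrow> 'a \<Rightarrow> real"
    and F :: "real \<Rightarrow> real"
  assumes M: "prob_space M"
  and Zm: "\<And>n. Z n \<in> borel_measurable M"
  and Xm: "\<And>n i. i \<in> {1..n} \<Longrightarrow> X n i \<in> borel_measurable M"
  and ZF: "\<And>n c. measure M {\<omega>\<in>space M. Z n \<omega> \<le> c} = F c"
  and surj: "\<And>y. 0<y \<Longrightarrow> y<1 \<Longrightarrow> \<exists>c. F c = y"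
  and conv: "\<And>c e. 0<e \<Longrightarrow> (\<lambda>n. measure M {\<omega>\<in>space M. e < \<bar>emp_cdf n (\<lambda>i. X n i \<omega>) c - F c\<bar>}) \<longlonglongrightarrow> 0"
  and p: "0<p" "p<1"
  shows "(\<lambda>n. measure M {\<omega>\<in>space M. emp_cdf n (\<lambda>i. X n i \<omega>) (Z n \<omega>) < p}) \<longlonglongrightarrow> p"
    and "(\<lambda>n. measure M {\<omega>\<in>space M. p \<le> ltc n (\<lambda>i. X n i \<omega>) (Z n \<omega>)}) \<longlonglongrightarrow> 1 - p"
proof -
  interpret prob_space M by (rule M)
  have mI: "(\<lambda>\<omega>. if X n i \<omega> \<le> c \<omega> then 1 else 0::real) \<in> borel_measurable M"
    if "i \<in> {1..n}" "c \<in> borel_measurable M" for n i c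
  proof -
    note [measurable] = Xm[OF that(1)] that(2)
    show ?thesis by measurable
  qed
  have mI2: "(\<lambda>\<omega>. if X n i \<omega> < c \<omega> then 1 else 0::real) \<in> borel_measurable M"
    if "i \<in> {1..n}" "c \<in> borel_measurable M" for n i c
  proof -
    note [measurable] = Xm[OF that(1)] that(2)
    show ?thesis by measurable
  qed
  have mH: "(\<lambda>\<omega>. emp_cdf n (\<lambda>i. X n i \<omega>) (c \<omega>)) \<in> borel_measurable M"
    if "c \<in> borel_measurable M" for n c
    unfolding emp_cdf_sum
    by (intro borel_measurable_divide borel_measurable_sum mI[OF _ that] borel_measurable_const) auto
  have mL: "(\<lambda>\<omega>. ltc n (\<lambda>i. X n i \<omega>) (c \<omega>)) \<in> borel_measurable M"
    if "c \<in> borel_measurable M" for n c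
    unfolding ltc_sum
    by (intro borel_measurable_divide borel_measurable_sum mI2[OF _ that] borel_measurable_const) auto
  have setsA: "{\<omega>\<in>space M. emp_cdf n (\<lambda>i. X n i \<omega>) (Z n \<omega>) < p} \<in> sets M" for n
  proof -
    note [measurable] = mH[OF Zm]
    show ?thesis by measurable
  qed
  have setsB: "{\<omega>\<in>space M. p \<le> ltc n (\<lambda>i. X n i \<omega>) (Z n \<omega>)} \<in> sets M" for n
  proof -
    note [measurable] = mL[OF Zm]
    show ?thesis by measurable
  qed
  have setsD: "{\<omega>\<in>space M. e < \<bar>emp_cdf n (\<lambda>i. X n i \<omega>) c - F c\<bar>} \<in> sets M" for n c e
  proof -
    note [measurable] = mH[OF measurable_const[of c]]
    show ?thesis by measurable
  qed
  have setsZ: "{\<omega>\<in>space M. Z n \<omega> \<le> c} \<in> sets M" "{\<omega>\<in>space M. Z n \<omega> < c} \<in> sets M" 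
    "{\<omega>\<in>space M. c < Z n \<omega>} \<in> sets M" for n c
  proof -
    note [measurable] = Zm
    show "{\<omega>\<in>space M. Z n \<omega> \<le> c} \<in> sets M" by measurable
    show "{\<omega>\<in>space M. Z n \<omega> < c} \<in> sets M" by measurable
    show "{\<omega>\<in>space M. c < Z n \<omega>} \<in> sets M" by measurable
  qed
  have Zgt: "measure M {\<omega>\<in>space M. c < Z n \<omega>} = 1 - F c" for n c
  proof -
    have "{\<omega>\<in>space M. c < Z n \<omega>} = space M - {\<omega>\<in>space M. Z n \<omega> \<le> c}" by auto
    thus ?thesis using prob_compl[OF setsZ(1)] ZF by simp
  qed
  have Zlt: "measure M {\<omega>\<in>space M. Z n \<omega> < c} \<le> F c" for n c
    using finite_measure_mono[OF _ setsZ(1)] ZF by (metis (mono_tags, lifting) less_imp_le mem_Collect_eq subsetI)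
  define D where "D n c e = {\<omega>\<in>space M. e < \<bar>emp_cdf n (\<lambda>i. X n i \<omega>) c - F c\<bar>}" for n c e
  have setsD': "D n c e \<in> sets M" for n c e unfolding D_def by (rule setsD)
  have evD: "eventually (\<lambda>n. measure M (D n c e) < d) sequentially" if "0 < e" "0 < d" for c e d
    unfolding D_def using order_tendstoD(2)[OF conv[OF that(1)] that(2)] .
  show "(\<lambda>n. measure M {\<omega>\<in>space M. emp_cdf n (\<lambda>i. X n i \<omega>) (Z n \<omega>) < p}) \<longlonglongrightarrow> p"
  proof (rule tendstoI)
    fix \<delta> :: real assume d: "0 < \<delta>"
    let ?P = "\<lambda>n. measure M {\<omega>\<in>space M. emp_cdf n (\<lambda>i. X n i \<omega>) (Z n \<omega>) < p}"
    have up: "eventually (\<lambda>n. ?P n \<le> p + \<delta>/2) sequentially"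
    proof (cases "p + \<delta>/4 < 1")
      case True
      then obtain c where c: "F c = p + \<delta>/4" using surj[of "p + \<delta>/4"] p d by auto
      have ev: "eventually (\<lambda>n. measure M (D n c (\<delta>/8)) < \<delta>/4) sequentially"
        using d by (intro evD) auto
      show ?thesis using ev
      proof eventually_elim
        case (elim n)
        have sub: "{\<omega>\<in>space M. emp_cdf n (\<lambda>i. X n i \<omega>) (Z n \<omega>) < p}
           \<subseteq> {\<omega>\<in>space M. Z n \<omega> < c} \<union> D n c (\<delta>/8)"
        proof safe
          fix \<omega> assume w: "\<omega> \<in> space M" "emp_cdf n (\<lambda>i. X n i \<omega>) (Z n \<omega>) < p"
            "\<omega> \<notin> D n c (\<delta>/8)"
          show "Z n \<omega> < c"
          proof (rule ccontr)
            assume "\<not> Z n \<omega> < c"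
            hence "emp_cdf n (\<lambda>i. X n i \<omega>) c \<le> emp_cdf n (\<lambda>i. X n i \<omega>) (Z n \<omega>)"
              by (intro emp_cdf_mono) simp
            moreover have "\<bar>emp_cdf n (\<lambda>i. X n i \<omega>) c - F c\<bar> \<le> \<delta>/8" using w unfolding D_def by auto
            ultimately show False using w c d unfolding abs_le_iff by linarith
          qed
        qed
        have "?P n \<le> measure M ({\<omega>\<in>space M. Z n \<omega> < c} \<union> D n c (\<delta>/8))"
          by (rule finite_measure_mono[OF sub sets.Un[OF setsZ(2) setsD']])
        also have "\<dots> \<le> measure M {\<omega>\<in>space M. Z n \<omega> < c} + measure M (D n c (\<delta>/8))"
          by (rule measure_Un_le[OF setsZ(2) setsD'])
        finally show ?case using Zlt[of n c] c elim by simp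
      qed
    next
      case False
      show ?thesis using False d by (intro always_eventually allI order_trans[OF prob_le_1]) linarith
    qed
    have lo: "eventually (\<lambda>n. p - \<delta>/2 \<le> ?P n) sequentially"
    proof (cases "0 < p - \<delta>/4")
      case True
      then obtain c where c: "F c = p - \<delta>/4" using surj[of "p - \<delta>/4"] p d by auto
      have ev: "eventually (\<lambda>n. measure M (D n c (\<delta>/8)) < \<delta>/4) sequentially"
        using d by (intro evD) auto
      show ?thesis using ev
      proof eventually_elim
        case (elim n)
        have sub: "{\<omega>\<in>space M. Z n \<omega> \<le> c} \<subseteq> 
           {\<omega>\<in>space M. emp_cdf n (\<lambda>i. X n i \<omega>) (Z n \<omega>) < p} \<union> D n c (\<delta>/8)"
        proof safe
          fix \<omega> assume w: "\<omega> \<in> space M" "Z n \<omega> \<le> c" "\<omega> \<notin> D n c (\<delta>/8)"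
          have "emp_cdf n (\<lambda>i. X n i \<omega>) (Z n \<omega>) \<le> emp_cdf n (\<lambda>i. X n i \<omega>) c"
            by (intro emp_cdf_mono) (simp add: w)
          moreover have "\<bar>emp_cdf n (\<lambda>i. X n i \<omega>) c - F c\<bar> \<le> \<delta>/8" using w unfolding D_def by auto
          ultimately show "emp_cdf n (\<lambda>i. X n i \<omega>) (Z n \<omega>) < p" using w c d unfolding abs_le_iff by linarith
        qed
        have "F c \<le> measure M ({\<omega>\<in>space M. emp_cdf n (\<lambda>i. X n i \<omega>) (Z n \<omega>) < p} \<union> D n c (\<delta>/8))"
          unfolding ZF[symmetric, where n=n and c=c]
          by (rule finite_measure_mono[OF sub sets.Un[OF setsA setsD']])
        also have "\<dots> \<le> ?P n + measure M (D n c (\<delta>/8))"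
          by (rule measure_Un_le[OF setsA setsD'])
        finally show ?case using c elim by simp
      qed
    next
      case False
      show ?thesis using False d by (intro always_eventually allI order_trans[OF _ measure_nonneg]) linarith
    qed
    show "eventually (\<lambda>n. dist (?P n) p < \<delta>) sequentially"
      using up lo by eventually_elim (use d in \<open>auto simp: dist_real_def abs_if\<close>)
  qed
  show "(\<lambda>n. measure M {\<omega>\<in>space M. p \<le> ltc n (\<lambda>i. X n i \<omega>) (Z n \<omega>)}) \<longlonglongrightarrow> 1 - p"
  proof (rule tendstoI)
    fix \<delta> :: real assume d: "0 < \<delta>"
    let ?P = "\<lambda>n. measure M {\<omega>\<in>space M. p \<le> ltc n (\<lambda>i. X n i \<omega>) (Z n \<omega>)}"
    have up: "eventually (\<lambda>n. ?P n \<le> 1 - p + \<delta>/2) sequentially"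
    proof (cases "0 < p - \<delta>/4")
      case True
      then obtain c where c: "F c = p - \<delta>/4" using surj[of "p - \<delta>/4"] p d by auto
      have ev: "eventually (\<lambda>n. measure M (D n c (\<delta>/8)) < \<delta>/4) sequentially"
        using d by (intro evD) auto
      show ?thesis using ev
      proof eventually_elim
        case (elim n)
        have sub: "{\<omega>\<in>space M. p \<le> ltc n (\<lambda>i. X n i \<omega>) (Z n \<omega>)}
           \<subseteq> {\<omega>\<in>space M. c < Z n \<omega>} \<union> D n c (\<delta>/8)"
        proof safe
          fix \<omega> assume w: "\<omega> \<in> space M" "p \<le> ltc n (\<lambda>i. X n i \<omega>) (Z n \<omega>)"
            "\<omega> \<notin> D n c (\<delta>/8)"
          show "c < Z n \<omega>"
          proof (rule ccontr)
            assume "\<not> c < Z n \<omega>"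
            hence "ltc n (\<lambda>i. X n i \<omega>) (Z n \<omega>) \<le> emp_cdf n (\<lambda>i. X n i \<omega>) c"
              by (intro ltc_le_emp_cdf) simp
            moreover have "\<bar>emp_cdf n (\<lambda>i. X n i \<omega>) c - F c\<bar> \<le> \<delta>/8" using w unfolding D_def by auto
            ultimately show False using w c d unfolding abs_le_iff by linarith
          qed
        qed
        have "?P n \<le> measure M ({\<omega>\<in>space M. c < Z n \<omega>} \<union> D n c (\<delta>/8))"
          by (rule finite_measure_mono[OF sub sets.Un[OF setsZ(3) setsD']])
        also have "\<dots> \<le> measure M {\<omega>\<in>space M. c < Z n \<omega>} + measure M (D n c (\<delta>/8))"
          by (rule measure_Un_le[OF setsZ(3) setsD'])
        finally show ?case using Zgt[of c n] c elim by simp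
      qed
    next
      case False
      show ?thesis using False d by (intro always_eventually allI order_trans[OF prob_le_1]) linarith
    qed
    have lo: "eventually (\<lambda>n. 1 - p - \<delta>/2 \<le> ?P n) sequentially"
    proof (cases "p + \<delta>/4 < 1")
      case True
      then obtain c where c: "F c = p + \<delta>/4" using surj[of "p + \<delta>/4"] p d by auto
      have ev: "eventually (\<lambda>n. measure M (D n c (\<delta>/8)) < \<delta>/4) sequentially"
        using d by (intro evD) auto
      show ?thesis using ev
      proof eventually_elim
        case (elim n)
        have sub: "{\<omega>\<in>space M. c < Z n \<omega>} \<subseteq> 
           {\<omega>\<in>space M. p \<le> ltc n (\<lambda>i. X n i \<omega>) (Z n \<omega>)} \<union> D n c (\<delta>/8)"
        proof safe
          fix \<omega> assume w: "\<omega> \<in> space M" "c < Z n \<omega>" "\<omega> \<notin> D n c (\<delta>/8)"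
          have "emp_cdf n (\<lambda>i. X n i \<omega>) c \<le> ltc n (\<lambda>i. X n i \<omega>) (Z n \<omega>)"
            by (intro emp_cdf_le_ltc) (simp add: w)
          moreover have "\<bar>emp_cdf n (\<lambda>i. X n i \<omega>) c - F c\<bar> \<le> \<delta>/8" using w unfolding D_def by auto
          ultimately show "p \<le> ltc n (\<lambda>i. X n i \<omega>) (Z n \<omega>)" using w c d unfolding abs_le_iff by linarith
        qed
        have "1 - F c \<le> measure M ({\<omega>\<in>space M. p \<le> ltc n (\<lambda>i. X n i \<omega>) (Z n \<omega>)} \<union> D n c (\<delta>/8))"
          unfolding Zgt[symmetric, of c n]
          by (rule finite_measure_mono[OF sub sets.Un[OF setsB setsD']])
        also have "\<dots> \<le> ?P n + measure M (D n c (\<delta>/8))"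
          by (rule measure_Un_le[OF setsB setsD'])
        finally show ?case using c elim by simp
      qed
    next
      case False
      show ?thesis using False d by (intro always_eventually allI order_trans[OF _ measure_nonneg]) linarith
    qed
    show "eventually (\<lambda>n. dist (?P n) (1 - p) < \<delta>) sequentially"
      using up lo by eventually_elim (use d in \<open>auto simp: dist_real_def abs_if\<close>)
  qed
qed



lemma ltc_cong: "(\<And>i. i \<in> {1..n} \<Longrightarrow> x i = y i) \<Longrightarrow> ltc n x c = ltc n y c"
  unfolding ltc_def by (metis (no_types, lifting) mem_Collect_eq)

lemma nabla_add: "nabla T ts (\<lambda>t. f t + g t) = nabla T ts f + nabla T ts g"
  by (simp add: nabla_def sum.distrib add_divide_distrib)

lemma nabla_const: "1 \<le> ts \<Longrightarrow> ts < T \<Longrightarrow> nabla T ts (\<lambda>t. c) = 0"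
  by (simp add: nabla_def)

lemma nabla_treat:
  assumes "1 \<le> ts" "ts < T"
  shows "nabla T ts (\<lambda>t. if ts < t then a t else 0) = (\<Sum>t\<in>{ts<..T}. a t) / real (T - ts)"
proof -
  have "(\<Sum>t\<in>{ts<..T}. if ts < t then a t else 0) = (\<Sum>t\<in>{ts<..T}. a t)"
    by (rule sum.cong) auto
  moreover have "(\<Sum>t\<in>{1..ts}. if ts < t then a t else 0) = (0::real)"
    by (rule sum.neutral) auto
  ultimately show ?thesis by (simp add: nabla_def)
qed

lemma F_surj:
  fixes M :: "'a measure" and Z :: "'a \<Rightarrow> real"
  assumes M: "prob_space M" and Zm: "Z \<in> borel_measurable M"
    and ZF: "\<And>c. measure M {\<omega>\<in>space M. Z \<omega> \<le> c} = F c"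
    and cont: "continuous_on UNIV F"
    and y: "0 < y" "y < 1"
  shows "\<exists>c. F c = y"
proof -
  interpret prob_space M by (rule M)
  have sets: "{\<omega>\<in>space M. Z \<omega> \<le> c} \<in> sets M" for c using Zm by measurable
  have mono: "F c \<le> F d" if "c \<le> d" for c d
    unfolding ZF[symmetric] using that by (intro finite_measure_mono[OF _ sets]) auto
  have "(\<lambda>k. F (real k)) \<longlonglongrightarrow> measure M (\<Union>k. {\<omega>\<in>space M. Z \<omega> \<le> real k})"
    unfolding ZF[symmetric]
    by (rule finite_Lim_measure_incseq) (use sets in \<open>auto simp: incseq_def intro: order_trans\<close>)
  moreover have "(\<Union>k. {\<omega>\<in>space M. Z \<omega> \<le> real k}) = space M"
    by (auto intro: real_nat_ceiling_ge)
  ultimately have l1: "(\<lambda>k. F (real k)) \<longlonglongrightarrow> 1" by (simp add: prob_space)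
  have "(\<lambda>k. F (- real k)) \<longlonglongrightarrow> measure M (\<Inter>k. {\<omega>\<in>space M. Z \<omega> \<le> - real k})"
    unfolding ZF[symmetric]
    by (rule finite_Lim_measure_decseq) (use sets in \<open>auto simp: decseq_def intro: order_trans\<close>)
  moreover have "(\<Inter>k. {\<omega>\<in>space M. Z \<omega> \<le> - real k}) = {}"
  proof safe
    fix x assume "x \<in> (\<Inter>k. {\<omega>\<in>space M. Z \<omega> \<le> - real k})"
    hence "Z x \<le> - real (nat \<lceil>- Z x\<rceil> + 1)" by blast
    moreover have "- Z x \<le> real (nat \<lceil>- Z x\<rceil>)" by linarith
    ultimately show "x \<in> {}" by simp
  qed
  ultimately have l0: "(\<lambda>k. F (- real k)) \<longlonglongrightarrow> 0" by simp
  obtain k1 where k1: "F (real k1) > y" using order_tendstoD(1)[OF l1 y(2)] by (auto dest: eventually_happens)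
  obtain k0 where k0: "F (- real k0) < y" using order_tendstoD(2)[OF l0 y(1)] by (auto dest: eventually_happens)
  have "- real k0 \<le> real k1" by simp
  from IVT'[of F "- real k0" y "real k1", OF _ _ this continuous_on_subset[OF cont]] k0 k1
  show ?thesis by auto
qed



theorem corollary1:
  fixes M :: "'a measure"
    and T tstar :: nat
    and eta :: "nat \<Rightarrow> nat \<Rightarrow> nat \<Rightarrow> 'a \<Rightarrow> real"
    and theta :: "nat \<Rightarrow> nat \<Rightarrow> 'a \<Rightarrow> real"
    and gamma :: "nat \<Rightarrow> nat \<Rightarrow> 'a \<Rightarrow> real"
    and a :: "nat \<Rightarrow> real"
    and F :: "real \<Rightarrow> real"
    and alpha0 tau :: real
  defines "W \<equiv> \<lambda>n i \<omega>. nabla T tstar (\<lambda>t. eta n i t \<omega>)"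
  defines "Y \<equiv> \<lambda>n i t \<omega>. Yobs tstar a (theta n i \<omega>) (gamma n t \<omega>) (eta n i t \<omega>) i t"
  defines "alphahat \<equiv> \<lambda>n \<omega>. nabla T tstar (\<lambda>t. Y n 0 t \<omega>)
             - (\<Sum>j\<in>{1..n}. nabla T tstar (\<lambda>t. Y n j t \<omega>)) / real n"
  defines "What \<equiv> \<lambda>n \<omega> i. nabla T tstar (\<lambda>t. Y n i t \<omega>)
             - (\<Sum>j\<in>{1..n}. nabla T tstar (\<lambda>t. Y n j t \<omega>)) / real n"
  assumes M: "prob_space M"
    and tstar: "1 \<le> tstar" "tstar < T"
    and meas: "\<And>n i t. i \<le> n \<Longrightarrow> t \<in> {1..T} \<Longrightarrow> eta n i t \<in> borel_measurable M"
    \<comment> \<open>Assumption 1 (i): mean zero\<close>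
    and A1_mean: "\<And>n i. i \<le> n \<Longrightarrow> integrable M (W n i) \<and> integral\<^sup>L M (W n i) = 0"
    \<comment> \<open>Assumption 1 (ii): common marginal distribution with continuous cdf F, finite 2nd moment\<close>
    and A1_cdf: "\<And>n i c. i \<le> n \<Longrightarrow> measure M {\<omega>\<in>space M. W n i \<omega> \<le> c} = F c"
    and A1_cont: "continuous_on UNIV F"
    and A1_sq: "\<And>n i. i \<le> n \<Longrightarrow> integrable M (\<lambda>\<omega>. (W n i \<omega>)\<^sup>2)"
    \<comment> \<open>Assumption 1 (iii): LLN and pointwise empirical-cdf convergence over controls\<close>
    and A1_lln: "conv_in_prob M (\<lambda>n \<omega>. (\<Sum>i\<in>{1..n}. W n i \<omega>) / real n) 0"
    and A1_ecdf: "\<And>c. conv_in_prob M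
                    (\<lambda>n \<omega>. (\<Sum>i\<in>{1..n}. if W n i \<omega> \<le> c then 1 else 0) / real n) (F c)"
    \<comment> \<open>null hypothesis and level\<close>
    and H0: "(\<Sum>t\<in>{tstar<..T}. a t) / real (T - tstar) = alpha0"
    and tau: "0 < tau" "tau < 1"
  shows "(\<lambda>n. measure M {\<omega>\<in>space M.
            alphahat n \<omega> - alpha0 < emp_quantile n (What n \<omega>) (tau / 2)
          \<or> alphahat n \<omega> - alpha0 > emp_quantile n (What n \<omega>) (1 - tau / 2)})
         \<longlonglongrightarrow> tau"
proof -
  interpret prob_space M by (rule M)
  have Wm: "W n i \<in> borel_measurable M" if "i \<le> n" for n i
    using A1_mean[OF that] by (auto intro: borel_measurable_integrable)
  define m where "m n \<omega> = (\<Sum>i\<in>{1..n}. W n i \<omega>) / real n" for n \<omega>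
  define g where "g n \<omega> = nabla T tstar (\<lambda>t. gamma n t \<omega>)" for n \<omega>
  have nY: "nabla T tstar (\<lambda>t. Y n i t \<omega>) = g n \<omega> + W n i \<omega>" if "i \<noteq> 0" for n i \<omega>
  proof -
    have "nabla T tstar (\<lambda>t. Y n i t \<omega>) = nabla T tstar (\<lambda>t. (theta n i \<omega> + gamma n t \<omega>) + eta n i t \<omega>)"
      using that by (simp add: Y_def Yobs_def)
    also have "\<dots> = g n \<omega> + W n i \<omega>"
      unfolding nabla_add nabla_const[OF tstar] g_def W_def by simp
    finally show ?thesis .
  qed
  have nY0: "nabla T tstar (\<lambda>t. Y n 0 t \<omega>) = alpha0 + (g n \<omega> + W n 0 \<omega>)" for n \<omega>
  proof -
    have "nabla T tstar (\<lambda>t. Y n 0 t \<omega>) = nabla T tstar (\<lambda>t. (if tstar < t then a t else 0) +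
            ((theta n 0 \<omega> + gamma n t \<omega>) + eta n 0 t \<omega>))"
      by (simp add: Y_def Yobs_def cong: if_cong, rule arg_cong[where f="nabla T tstar"], auto)
    also have "\<dots> = alpha0 + (g n \<omega> + W n 0 \<omega>)"
      unfolding nabla_add nabla_const[OF tstar] nabla_treat[OF tstar] g_def W_def H0 by simp
    finally show ?thesis .
  qed
  have avg: "(\<Sum>j\<in>{1..n}. nabla T tstar (\<lambda>t. Y n j t \<omega>)) / real n = g n \<omega> + m n \<omega>"
    if "1 \<le> n" for n \<omega>
  proof -
    have "(\<Sum>j\<in>{1..n}. nabla T tstar (\<lambda>t. Y n j t \<omega>)) = (\<Sum>j\<in>{1..n}. g n \<omega> + W n j \<omega>)"
      by (rule sum.cong) (auto simp: nY)
    also have "\<dots> = real n * g n \<omega> + (\<Sum>j\<in>{1..n}. W n j \<omega>)" by (simp add: sum.distrib)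
    finally show ?thesis using that by (simp add: m_def field_simps)
  qed
  have ahat: "alphahat n \<omega> - alpha0 = W n 0 \<omega> - m n \<omega>" if "1 \<le> n" for n \<omega>
    unfolding alphahat_def nY0 avg[OF that] by simp
  have wh: "What n \<omega> i = W n i \<omega> - m n \<omega>" if "1 \<le> n" "i \<in> {1..n}" for n \<omega> i
    unfolding What_def avg[OF that(1)] using that(2) by (simp add: nY)
  define p1 where "p1 = tau / 2"
  define p2 where "p2 = 1 - tau / 2"
  have p: "0 < p1" "p1 \<le> 1" "0 < p2" "p2 \<le> 1" "p1 < p2" "p1 < 1" "p2 < 1"
    using tau by (auto simp: p1_def p2_def)
  let ?A = "\<lambda>n. {\<omega>\<in>space M. emp_cdf n (\<lambda>i. W n i \<omega>) (W n 0 \<omega>) < p1}"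
  let ?B = "\<lambda>n. {\<omega>\<in>space M. p2 \<le> ltc n (\<lambda>i. W n i \<omega>) (W n 0 \<omega>)}"
  have ev: "{\<omega>\<in>space M.
            alphahat n \<omega> - alpha0 < emp_quantile n (What n \<omega>) (tau / 2)
          \<or> alphahat n \<omega> - alpha0 > emp_quantile n (What n \<omega>) (1 - tau / 2)} = ?A n \<union> ?B n"
    if n: "1 \<le> n" for n
  proof -
    have cong: "\<And>i. i \<in> {1..n} \<Longrightarrow> What n \<omega> i = (\<lambda>i. W n i \<omega> - m n \<omega>) i" for \<omega>
      using wh[OF n] by simp
    have ec: "emp_cdf n (What n \<omega>) c = emp_cdf n (\<lambda>i. W n i \<omega>) (c + m n \<omega>)" for \<omega> c
      using emp_cdf_cong[of n "What n \<omega>" "\<lambda>i. W n i \<omega> - m n \<omega>" c] wh[OF n] emp_cdf_shift by simp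
    have lc: "ltc n (What n \<omega>) c = ltc n (\<lambda>i. W n i \<omega>) (c + m n \<omega>)" for \<omega> c
      using ltc_cong[of n "What n \<omega>" "\<lambda>i. W n i \<omega> - m n \<omega>" c] wh[OF n] ltc_shift by simp
    have e1: "(alphahat n \<omega> - alpha0 < emp_quantile n (What n \<omega>) p1) \<longleftrightarrow>
               emp_cdf n (\<lambda>i. W n i \<omega>) (W n 0 \<omega>) < p1" for \<omega>
      unfolding ahat[OF n] using quantile_le_iff[OF n p(1,2)]
      by (simp add: not_le[symmetric] ec)
    have e2: "(emp_quantile n (What n \<omega>) p2 < alphahat n \<omega> - alpha0) \<longleftrightarrow>
               p2 \<le> ltc n (\<lambda>i. W n i \<omega>) (W n 0 \<omega>)" for \<omega>
      unfolding ahat[OF n] quantile_less_iff[OF n p(3,4)]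
      by (simp add: lc)
    show ?thesis using e1 e2 unfolding p1_def p2_def by auto
  qed
  have disj: "?A n \<inter> ?B n = {}" for n
  proof (rule equals0I)
    fix \<omega> assume "\<omega> \<in> ?A n \<inter> ?B n"
    moreover have "ltc n (\<lambda>i. W n i \<omega>) (W n 0 \<omega>) \<le> emp_cdf n (\<lambda>i. W n i \<omega>) (W n 0 \<omega>)"
      by (rule ltc_le_emp_cdf) simp
    ultimately show False using p(5) by auto
  qed
  have conv: "(\<lambda>n. measure M {\<omega>\<in>space M. e < \<bar>emp_cdf n (\<lambda>i. W n i \<omega>) c - F c\<bar>}) \<longlonglongrightarrow> 0"
    if "0 < e" for c e
    unfolding emp_cdf_sum by (rule A1_ecdf[of c, unfolded conv_in_prob_def, rule_format, OF that])
  have surj: "\<exists>c. F c = y" if "0 < y" "y < 1" for y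
    by (rule F_surj[OF M Wm[of 0 0] _ A1_cont that]) (use A1_cdf[of 0 0] in auto)
  have Wm': "W n i \<in> borel_measurable M" if "i \<in> {1..n}" for n i
    using that by (intro Wm) simp
  have LA: "(\<lambda>n. measure M (?A n)) \<longlonglongrightarrow> p1"
    apply (rule L1(1)[where Z="\<lambda>n. W n 0" and X=W and F=F])
    apply (rule M)
    apply (rule Wm, simp)
    apply (erule Wm')
    apply (rule A1_cdf, simp)
    apply (erule (1) surj)
    apply (erule conv)
    apply (rule p(1))
    apply (rule p(6))
    done
  have LB: "(\<lambda>n. measure M (?B n)) \<longlonglongrightarrow> 1 - p2"
    apply (rule L1(2)[where Z="\<lambda>n. W n 0" and X=W and F=F])
    apply (rule M)
    apply (rule Wm, simp)
    apply (erule Wm')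
    apply (rule A1_cdf, simp)
    apply (erule (1) surj)
    apply (erule conv)
    apply (rule p(3))
    apply (rule p(7))
    done
  have setsA: "?A n \<in> sets M" and setsB: "?B n \<in> sets M" for n
  proof -
    have mI: "(\<lambda>\<omega>. if W n i \<omega> \<le> W n 0 \<omega> then 1 else 0::real) \<in> borel_measurable M"
      "(\<lambda>\<omega>. if W n i \<omega> < W n 0 \<omega> then 1 else 0::real) \<in> borel_measurable M"
      if "i \<in> {1..n}" for i
    proof -
      have "i \<le> n" using that by simp
      note [measurable] = Wm[OF this] Wm[OF le0[of n]]
      show "(\<lambda>\<omega>. if W n i \<omega> \<le> W n 0 \<omega> then 1 else 0::real) \<in> borel_measurable M"
        by measurable
      show "(\<lambda>\<omega>. if W n i \<omega> < W n 0 \<omega> then 1 else 0::real) \<in> borel_measurable M"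
        by measurable
    qed
    have [measurable]: "(\<lambda>\<omega>. emp_cdf n (\<lambda>i. W n i \<omega>) (W n 0 \<omega>)) \<in> borel_measurable M"
      unfolding emp_cdf_sum
      by (intro borel_measurable_divide borel_measurable_sum mI borel_measurable_const) auto
    have [measurable]: "(\<lambda>\<omega>. ltc n (\<lambda>i. W n i \<omega>) (W n 0 \<omega>)) \<in> borel_measurable M"
      unfolding ltc_sum
      by (intro borel_measurable_divide borel_measurable_sum mI borel_measurable_const) auto
    show "?A n \<in> sets M" by measurable
    show "?B n \<in> sets M" by measurable
  qed
  have T0: "(\<lambda>n. measure M (?A n) + measure M (?B n)) \<longlonglongrightarrow> p1 + (1 - p2)"
    by (rule tendsto_add[OF LA LB])
  have pt: "p1 + (1 - p2) = tau" by (simp add: p1_def p2_def)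
  have T: "(\<lambda>n. measure M (?A n) + measure M (?B n)) \<longlonglongrightarrow> tau"
    using T0 unfolding pt .
  have EV: "eventually (\<lambda>n. measure M (?A n) + measure M (?B n) =
      measure M {\<omega>\<in>space M.
            alphahat n \<omega> - alpha0 < emp_quantile n (What n \<omega>) (tau / 2)
          \<or> alphahat n \<omega> - alpha0 > emp_quantile n (What n \<omega>) (1 - tau / 2)}) sequentially"
    using eventually_ge_at_top[of 1]
  proof eventually_elim
    case (elim n)
    show ?case unfolding ev[OF elim] by (rule finite_measure_Union[symmetric, OF setsA setsB disj])
  qed
  show ?thesis by (rule Lim_transform_eventually[OF T EV])
qed

end
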